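(* Let $H=(V,E)$ be a hypergraph, let $e_1\in E$ and let $e_2\subsetneq e_1$ with $e_2\notin E$ and $|e_2|>1$. Define $H'=(V,E\cup\{e_2\})$. Then the projection $\operatorname{proj}_{\mathcal{J}^H}$ restricted to $\mathrm{MC}^{H'}$ is a linear isomorphism onto $\mathrm{MC}^H$, and \[\mathrm{MC}^{H'}=\Big\{w\in\mathbb{R}^{\mathcal{J}^{H'}}\ \Big|\ \operatorname{proj}_{\mathcal{J}^H}w\in\mathrm{MC}^H;\ w_J=\sum_{J'\in\mathcal{J}^{e_1}:\, J'\supseteq J} w_{J'}\ \ \forall J\in\mathcal{J}^{e_2}\Big\}.\]
   Context: Let $n$ be a positive integer, $[n]=\{1,\dots,n\}$. A hypergraph $H=(V,E)$ here has as vertex set $V$ a family of pairwise disjoint subsets of $[n]$, each of cardinality at least $2$, and hyperedge set $E$ consisting of subsets $e\subseteq V$ with $|e|\ge 2$. Write $L(V)=\{\{I\}: I\in V\}$. For a nonempty $e\subseteq V$, $\mathcal{J}^e$ denotes the family of sets $J\subseteq \bigcup_{I\in e} I$ with $|J\cap I|=1$ for every $I\in e$. Let $\mathcal{J}^H=\bigcup_{e\in L(V)\cup E}\mathcal{J}^e$. For $w\in\mathbb{R}^{\mathcal{J}^H}$ write $w_i=w_{\{i\}}$ and $w(A)=\sum_{i\in A}w_i$. Let $\mathscr{S}^H=\{w\in\{0,1\}^{\mathcal{J}^H}: w(I)=1\ \forall I\in V;\ w_J=\prod_{i\in J}w_i\ \forall J\in\mathcal{J}^H, |J|>1\}$ and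 $\mathrm{MC}^H=\operatorname{conv}\mathscr{S}^H$. $\operatorname{proj}_{S'}$ extracts the coordinates indexed by $S'$. *)

theory Defs
  imports "HOL-Analysis.Analysis" "HOL-Library.Function_Algebras"
begin

text \<open>Pointwise real vector space structure on functions, so that vectors in
  R^S (S a set of index sets) can be represented as functions
  nat set => real vanishing outside S, and the library notions
  convex hull and linear apply.\<close>

instantiation "fun" :: (type, real_vector) real_vector
begin
definition scaleR_fun :: "real \<Rightarrow> ('a \<Rightarrow> 'b) \<Rightarrow> 'a \<Rightarrow> 'b"
  where "scaleR_fun c f = (\<lambda>x. c *\<^sub>R f x)"
instance
  by standard (auto simp: scaleR_fun_def fun_eq_iff scaleR_add_right scaleR_add_left)
end

definition hypergraph :: "nat \<Rightarrow> nat set set \<Rightarrow> nat set set set \<Rightarrow> bool" where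
  "hypergraph n V E \<longleftrightarrow>
     (\<forall>I\<in>V. I \<subseteq> {1..n} \<and> card I \<ge> 2) \<and>
     (\<forall>I\<in>V. \<forall>I'\<in>V. I \<noteq> I' \<longrightarrow> I \<inter> I' = {}) \<and>
     (\<forall>e\<in>E. e \<subseteq> V \<and> card e \<ge> 2)"

definition LV :: "nat set set \<Rightarrow> nat set set set" where
  "LV V = (\<lambda>I. {I}) ` V"

definition Jfam :: "nat set set \<Rightarrow> nat set set" where
  "Jfam e = {J. J \<subseteq> \<Union>e \<and> (\<forall>I\<in>e. card (J \<inter> I) = 1)}"

definition JH :: "nat set set \<Rightarrow> nat set set set \<Rightarrow> nat set set" where
  "JH V E = \<Union> (Jfam ` (LV V \<union> E))"

definition RS :: "nat set set \<Rightarrow> (nat set \<Rightarrow> real) set" where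
  "RS S = {w. \<forall>J. J \<notin> S \<longrightarrow> w J = 0}"

text \<open>S^H (w_i = w {i})\<close>
definition SH :: "nat set set \<Rightarrow> nat set set set \<Rightarrow> (nat set \<Rightarrow> real) set" where
  "SH V E = {w \<in> RS (JH V E).
      (\<forall>J\<in>JH V E. w J \<in> {0, 1}) \<and>
      (\<forall>I\<in>V. (\<Sum>i\<in>I. w {i}) = 1) \<and>
      (\<forall>J\<in>JH V E. card J > 1 \<longrightarrow> w J = (\<Prod>i\<in>J. w {i}))}"

definition MC :: "nat set set \<Rightarrow> nat set set set \<Rightarrow> (nat set \<Rightarrow> real) set" where
  "MC V E = convex hull (SH V E)"

definition proj :: "nat set set \<Rightarrow> (nat set \<Rightarrow> real) \<Rightarrow> (nat set \<Rightarrow> real)" where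
  "proj S w = (\<lambda>J. if J \<in> S then w J else 0)"

end

theory Submission
  imports Defs
begin


lemma prod01:
  assumes "finite J" "\<forall>i\<in>J. (x i::real) \<in> {0,1}"
  shows "prod x J = (if \<forall>i\<in>J. x i = 1 then 1 else 0)"
  using assms by (induction J rule: finite_induct) auto

lemma sum01:
  assumes "finite I" "\<forall>i\<in>I. (f i::real) \<in> {0,1}"
  shows "sum f I = real (card {i\<in>I. f i = 1})"
proof -
  have "sum f I = sum (\<lambda>i. if f i = 1 then 1 else 0) I"
    using assms(2) by (intro sum.cong) auto
  also have "\<dots> = real (card {i\<in>I. f i = 1})"
    using assms(1) by (simp add: sum.If_cases Int_def conj_commute)
  finally show ?thesis .
qed

lemma Jfam_unique:
  assumes "J \<in> Jfam e" "K \<in> Jfam e" "J \<subseteq> K" "\<forall>I\<in>e. finite I"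
  shows "J = K"
proof
  show "K \<subseteq> J"
  proof
    fix x assume "x \<in> K"
    then obtain I where I: "I \<in> e" "x \<in> I" using assms(2) unfolding Jfam_def by blast
    have c1: "card (J \<inter> I) = 1" "card (K \<inter> I) = 1" using assms(1,2) I(1) unfolding Jfam_def by auto
    have "J \<inter> I = K \<inter> I"
      by (rule card_subset_eq) (use assms I c1 in auto)
    then show "x \<in> J" using \<open>x \<in> K\<close> I by blast
  qed
qed (use assms in auto)

lemma card_le_Jfam:
  assumes "\<forall>I\<in>V. \<forall>I'\<in>V. I \<noteq> I' \<longrightarrow> I \<inter> I' = {}" "e \<subseteq> V" "J \<in> Jfam e" "finite J"
  shows "card e \<le> card J"
proof -
  define f where "f I = the_elem (J \<inter> I)" for I
  have fI: "f I \<in> J \<inter> I" if "I \<in> e" for I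
  proof -
    have "card (J \<inter> I) = 1" using assms(3) that unfolding Jfam_def by auto
    then obtain x where "J \<inter> I = {x}" by (rule card_1_singletonE)
    then show ?thesis unfolding f_def by simp
  qed
  have "inj_on f e"
  proof (rule inj_onI)
    fix I I' assume "I \<in> e" "I' \<in> e" "f I = f I'"
    then have a: "f I \<in> I" "f I' \<in> I'" "I \<in> V" "I' \<in> V" "f I = f I'"
      using fI[of I] fI[of I'] assms(2) by auto
    show "I = I'"
    proof (rule ccontr)
      assume "I \<noteq> I'"
      then have "I \<inter> I' = {}" using assms(1) a(3,4) by simp
      then show False using a(1,2,5) by auto
    qed
  qed
  moreover have "f ` e \<subseteq> J" using fI by blast
  ultimately show ?thesis using card_inj_on_le assms(4) by blast
qed

lemma vertex_identity:
  assumes fin: "\<forall>I\<in>V. finite I" and e1V: "e1 \<subseteq> V" and fe1: "finite (\<Union>e1)"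
    and e21: "e2 \<subseteq> e1" and J: "J \<in> Jfam e2"
    and v01: "\<forall>I\<in>V. \<forall>i\<in>I. v {i} \<in> {0,1::real}"
    and vsum: "\<forall>I\<in>V. (\<Sum>i\<in>I. v {i}) = 1"
    and vprod: "\<forall>J'\<in>Jfam e1. v J' = (\<Prod>i\<in>J'. v {i})"
  shows "(\<Sum>J'\<in>{J' \<in> Jfam e1. J \<subseteq> J'}. v J') = (\<Prod>i\<in>J. v {i})"
proof -
  define C where "C = {i \<in> \<Union>e1. v {i} = 1}"
  have CJ: "C \<in> Jfam e1"
    unfolding Jfam_def
  proof (intro CollectI conjI ballI)
    show "C \<subseteq> \<Union>e1" unfolding C_def by auto
    fix I assume I: "I \<in> e1"
    have "C \<inter> I = {i\<in>I. v {i} = 1}" using I unfolding C_def by auto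
    moreover have "(\<Sum>i\<in>I. v {i}) = real (card {i\<in>I. v {i} = 1})"
      using sum01[of I "\<lambda>i. v {i}"] fin v01 I e1V by auto
    ultimately show "card (C \<inter> I) = 1" using vsum I e1V by auto
  qed
  have finJ1: "finite (Jfam e1)"
    by (rule finite_subset[of _ "Pow (\<Union>e1)"]) (use fe1 in \<open>auto simp: Jfam_def\<close>)
  have val: "v J' = (if J' = C then 1 else 0)" if J': "J' \<in> Jfam e1" for J'
  proof -
    have sub: "J' \<subseteq> \<Union>e1" using J' unfolding Jfam_def by auto
    have z: "\<forall>i\<in>J'. v {i} \<in> {0,1}" using sub v01 e1V by blast
    have "v J' = (if \<forall>i\<in>J'. v {i} = 1 then 1 else 0)"
      using vprod J' prod01[OF finite_subset[OF sub fe1] z] by auto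
    moreover have "(\<forall>i\<in>J'. v {i} = 1) \<longleftrightarrow> J' = C"
    proof
      assume "\<forall>i\<in>J'. v {i} = 1"
      then have "J' \<subseteq> C" using sub unfolding C_def by auto
      then show "J' = C" using Jfam_unique[OF J' CJ] fin e1V by auto
    qed (auto simp: C_def)
    ultimately show ?thesis by simp
  qed
  have "(\<Sum>J'\<in>{J' \<in> Jfam e1. J \<subseteq> J'}. v J') = (\<Sum>J'\<in>{J' \<in> Jfam e1. J \<subseteq> J'}. if J' = C then 1 else 0)"
  proof (rule sum.cong)
    fix x assume "x \<in> {J' \<in> Jfam e1. J \<subseteq> J'}"
    then have "x \<in> Jfam e1" by simp
    then show "v x = (if x = C then 1 else 0)" by (rule val)
  qed (rule refl)
  also have "\<dots> = (if J \<subseteq> C then 1 else 0)"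
  proof -
    have finS: "finite {J' \<in> Jfam e1. J \<subseteq> J'}" using finJ1 by simp
    have "(\<Sum>J'\<in>{J' \<in> Jfam e1. J \<subseteq> J'}. if J' = C then 1 else 0) = (if C \<in> {J' \<in> Jfam e1. J \<subseteq> J'} then 1 else (0::real))"
      by (rule sum.delta[OF finS])
    then show ?thesis using CJ by simp
  qed
  also have "\<dots> = (\<Prod>i\<in>J. v {i})"
  proof -
    have sub: "J \<subseteq> \<Union>e1" using J e21 unfolding Jfam_def by blast
    have z: "\<forall>i\<in>J. v {i} \<in> {0,1}" using sub v01 e1V by blast
    have "(\<Prod>i\<in>J. v {i}) = (if \<forall>i\<in>J. v {i} = 1 then 1 else 0)"
      using prod01[OF finite_subset[OF sub fe1] z] by auto
    moreover have "J \<subseteq> C \<longleftrightarrow> (\<forall>i\<in>J. v {i} = 1)" using sub unfolding C_def by auto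
    ultimately show ?thesis by simp
  qed
  finally show ?thesis .
qed



theorem proposition2p3:
  fixes n :: nat and V :: "nat set set" and E :: "nat set set set"
    and e1 e2 :: "nat set set"
  assumes "hypergraph n V E"
    and "e1 \<in> E" and "e2 \<subset> e1" and "e2 \<notin> E" and "card e2 > 1"
  shows "linear (proj (JH V E))
     \<and> inj_on (proj (JH V E)) (MC V (insert e2 E))
     \<and> proj (JH V E) ` MC V (insert e2 E) = MC V E
     \<and> MC V (insert e2 E) =
         {w \<in> RS (JH V (insert e2 E)).
            proj (JH V E) w \<in> MC V E \<and>
            (\<forall>J\<in>Jfam e2. w J = (\<Sum>J'\<in>{J' \<in> Jfam e1. J \<subseteq> J'}. w J'))}"
proof -
  note hg = assms(1)[unfolded hypergraph_def]
  have Vsub: "\<forall>I\<in>V. I \<subseteq> {1..n}" and Vcard: "\<forall>I\<in>V. card I \<ge> 2"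
    and disj: "\<forall>I\<in>V. \<forall>I'\<in>V. I \<noteq> I' \<longrightarrow> I \<inter> I' = {}"
    and Esub: "\<forall>e\<in>E. e \<subseteq> V \<and> card e \<ge> 2" using hg by auto
  have finI: "\<forall>I\<in>V. finite I" using Vsub finite_subset by blast
  have e1V: "e1 \<subseteq> V" and ce1: "card e1 \<ge> 2" using Esub assms(2) by auto
  have e21: "e2 \<subseteq> e1" using assms(3) by auto
  have e2V: "e2 \<subseteq> V" using e1V e21 by auto
  have finU: "finite (\<Union>e)" if "e \<subseteq> V" for e
    by (rule finite_subset[of _ "{1..n}"]) (use that Vsub in auto)
  define JE where "JE = JH V E"
  define JE' where "JE' = JH V (insert e2 E)"
  define P where "P = proj JE"
  define X where "X w = (\<lambda>J. if J \<in> JE then w J else if J \<in> Jfam e2 then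
      (\<Sum>J'\<in>{J' \<in> Jfam e1. J \<subseteq> J'}. w J') else 0)" for w :: "nat set \<Rightarrow> real"
  have JE'_eq: "JE' = JE \<union> Jfam e2" unfolding JE'_def JE_def JH_def by auto
  have linP: "linear P"
    by (rule linearI) (auto simp: P_def proj_def scaleR_fun_def)
  have linX: "linear X"
    by (rule linearI) (auto simp: X_def scaleR_fun_def sum.distrib sum_distrib_left)
  have sing: "{i} \<in> JE" if "I \<in> V" "i \<in> I" for I i
  proof -
    have "{i} \<in> Jfam {I}" using that unfolding Jfam_def by auto
    moreover have "{I} \<in> LV V" using that unfolding LV_def by auto
    ultimately show ?thesis unfolding JE_def JH_def by blast
  qed
  have inV: "\<exists>I\<in>V. i \<in> I" if "J \<in> JE'" "i \<in> J" for J i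
  proof -
    have "J \<in> \<Union> (Jfam ` (LV V \<union> insert e2 E))" using that(1) unfolding JE'_def JH_def .
    then obtain e where e: "e \<in> LV V \<union> insert e2 E" "J \<in> Jfam e" by (rule UN_E)
    have "e \<subseteq> V" using e(1) e2V Esub unfolding LV_def by auto
    then show ?thesis using e(2) that(2) unfolding Jfam_def by blast
  qed
  have e1JE: "Jfam e1 \<subseteq> JE" unfolding JE_def JH_def using assms(2) by auto
  have JEsub: "JE \<subseteq> JE'" using JE'_eq by auto
  have cJ1: "card J' > 1" if "J' \<in> Jfam e1" for J'
  proof -
    have "finite J'" using that finU[OF e1V] unfolding Jfam_def using finite_subset by blast
    then show ?thesis using card_le_Jfam[OF disj e1V that] ce1 by auto
  qed
  have cJ2: "card J > 1" if "J \<in> Jfam e2" for J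
  proof -
    have "finite J" using that finU[OF e2V] unfolding Jfam_def using finite_subset by blast
    then show ?thesis using card_le_Jfam[OF disj e2V that] assms(5) by auto
  qed
  have VI: "(\<Sum>J'\<in>{J' \<in> Jfam e1. J \<subseteq> J'}. v J') = (\<Prod>i\<in>J. v {i})"
    if v: "v \<in> SH V E" and J: "J \<in> Jfam e2" for v J
  proof (rule vertex_identity[OF finI e1V finU[OF e1V] e21 J])
    show "\<forall>I\<in>V. \<forall>i\<in>I. v {i} \<in> {0, 1}" using v sing unfolding SH_def JE_def by blast
    show "\<forall>I\<in>V. (\<Sum>i\<in>I. v {i}) = 1" using v unfolding SH_def by blast
    show "\<forall>J'\<in>Jfam e1. v J' = (\<Prod>i\<in>J'. v {i})" using v e1JE cJ1 unfolding SH_def JE_def by blast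
  qed
  have VI': "v J = (\<Sum>J'\<in>{J' \<in> Jfam e1. J \<subseteq> J'}. v J')"
    if v: "v \<in> SH V (insert e2 E)" and J: "J \<in> Jfam e2" for v J
  proof -
    have "(\<Sum>J'\<in>{J' \<in> Jfam e1. J \<subseteq> J'}. v J') = (\<Prod>i\<in>J. v {i})"
    proof (rule vertex_identity[OF finI e1V finU[OF e1V] e21 J])
      show "\<forall>I\<in>V. \<forall>i\<in>I. v {i} \<in> {0, 1}" using v sing JEsub unfolding SH_def JE'_def by blast
      show "\<forall>I\<in>V. (\<Sum>i\<in>I. v {i}) = 1" using v unfolding SH_def by blast
      show "\<forall>J'\<in>Jfam e1. v J' = (\<Prod>i\<in>J'. v {i})" using v e1JE JEsub cJ1 unfolding SH_def JE'_def by blast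
    qed
    moreover have "v J = (\<Prod>i\<in>J. v {i})" using v J JE'_eq cJ2 unfolding SH_def JE'_def by blast
    ultimately show ?thesis by simp
  qed
  have PS: "P ` SH V (insert e2 E) \<subseteq> SH V E"
  proof
    fix u assume "u \<in> P ` SH V (insert e2 E)"
    then obtain v where v: "v \<in> SH V (insert e2 E)" and u: "u = P v" by auto
    have us: "u {i} = v {i}" if "I \<in> V" "i \<in> I" for I i using sing[OF that] u unfolding P_def proj_def by auto
    show "u \<in> SH V E" unfolding SH_def
    proof (intro CollectI conjI ballI impI)
      show "u \<in> RS (JH V E)" using u unfolding P_def proj_def RS_def JE_def by auto
      fix J assume J: "J \<in> JH V E"
      then have J': "J \<in> JE'" using JEsub unfolding JE_def by auto
      show "u J \<in> {0,1}" using v J' u J unfolding SH_def JE'_def P_def proj_def JE_def by auto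
      assume "card J > 1"
      then have "v J = (\<Prod>i\<in>J. v {i})" using v J' unfolding SH_def JE'_def by auto
      moreover have "(\<Prod>i\<in>J. v {i}) = (\<Prod>i\<in>J. u {i})"
      proof (intro prod.cong refl)
        fix x assume "x \<in> J"
        then obtain I where "I \<in> V" "x \<in> I" using inV[OF J'] by blast
        then show "v {x} = u {x}" using us by simp
      qed
      ultimately show "u J = (\<Prod>i\<in>J. u {i})" using u J unfolding P_def proj_def JE_def by auto
    next
      fix I assume "I \<in> V"
      then show "(\<Sum>i\<in>I. u {i}) = 1" using v us unfolding SH_def by auto
    qed
  qed
  have XS: "X ` SH V E \<subseteq> SH V (insert e2 E)"
  proof
    fix u assume "u \<in> X ` SH V E"
    then obtain v where v: "v \<in> SH V E" and u: "u = X v" by auto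
    have us: "u {i} = v {i}" if "I \<in> V" "i \<in> I" for I i using sing[OF that] u unfolding X_def by auto
    have uE: "u J = v J" if "J \<in> JE" for J using that u unfolding X_def by auto
    have ue2: "u J = (\<Prod>i\<in>J. v {i})" if "J \<in> Jfam e2" "J \<notin> JE" for J
      using that u VI[OF v that(1)] unfolding X_def by auto
    have v01: "\<forall>I\<in>V. \<forall>i\<in>I. v {i} \<in> {0, 1}" using v sing unfolding SH_def JE_def by blast
    show "u \<in> SH V (insert e2 E)" unfolding SH_def
    proof (intro CollectI conjI ballI impI)
      show "u \<in> RS (JH V (insert e2 E))" using u JE'_eq unfolding X_def RS_def JE'_def by auto
      fix J assume J: "J \<in> JH V (insert e2 E)"
      then have J': "J \<in> JE'" unfolding JE'_def .
      have eqp: "(\<Prod>i\<in>J. v {i}) = (\<Prod>i\<in>J. u {i})"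
      proof (intro prod.cong refl)
        fix x assume "x \<in> J"
        then obtain I where "I \<in> V" "x \<in> I" using inV[OF J'] by blast
        then show "v {x} = u {x}" using us by simp
      qed
      show "u J \<in> {0,1}"
      proof (cases "J \<in> JE")
        case True then show ?thesis using uE v unfolding SH_def JE_def by auto
      next
        case False
        then have J2: "J \<in> Jfam e2" using J' JE'_eq by auto
        have "finite J" using J2 finU[OF e2V] unfolding Jfam_def using finite_subset by blast
        moreover have "\<forall>i\<in>J. v {i} \<in> {0,1}" using v01 inV[OF J'] by blast
        ultimately show ?thesis using prod01[of J "\<lambda>i. v {i}"] ue2[OF J2 False] by auto
      qed
      assume "card J > 1"
      show "u J = (\<Prod>i\<in>J. u {i})"
      proof (cases "J \<in> JE")
        case True then show ?thesis using uE v eqp \<open>card J > 1\<close> unfolding SH_def JE_def by auto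
      next
        case False
        then have J2: "J \<in> Jfam e2" using J' JE'_eq by auto
        then show ?thesis using ue2[OF J2 False] eqp by auto
      qed
    next
      fix I assume "I \<in> V"
      then show "(\<Sum>i\<in>I. u {i}) = 1" using v us unfolding SH_def by auto
    qed
  qed
  have PX: "P (X v) = v" if "v \<in> RS JE" for v
    using that unfolding P_def proj_def X_def RS_def by auto
  have SHsub: "SH V E \<subseteq> RS JE" unfolding SH_def JE_def by auto
  have PSH: "P ` SH V (insert e2 E) = SH V E"
  proof
    show "SH V E \<subseteq> P ` SH V (insert e2 E)"
    proof
      fix v assume "v \<in> SH V E"
      then have "v = P (X v)" "X v \<in> SH V (insert e2 E)" using PX SHsub XS by auto
      then show "v \<in> P ` SH V (insert e2 E)" by blast
    qed
  qed (rule PS)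
  have MCeq: "P ` MC V (insert e2 E) = MC V E"
    unfolding MC_def convex_hull_linear_image[OF linP] PSH ..
  define Cs where "Cs = {w :: nat set \<Rightarrow> real. \<forall>J\<in>Jfam e2. w J = (\<Sum>J'\<in>{J' \<in> Jfam e1. J \<subseteq> J'}. w J')}"
  have cvC: "convex Cs"
    unfolding convex_def Cs_def by (auto simp: scaleR_fun_def sum.distrib sum_distrib_left)
  have cvR: "convex (RS S)" for S
    unfolding convex_def RS_def by (auto simp: scaleR_fun_def)
  have MCsub: "MC V (insert e2 E) \<subseteq> Cs \<inter> RS JE'"
    unfolding MC_def
  proof (rule hull_minimal)
    show "SH V (insert e2 E) \<subseteq> Cs \<inter> RS JE'"
      using VI' unfolding Cs_def SH_def JE'_def by auto
    show "convex (Cs \<inter> RS JE')" using cvC cvR by (rule convex_Int)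
  qed
  have XP: "X (P w) = w" if "w \<in> Cs \<inter> RS JE'" for w
  proof
    fix J show "X (P w) J = w J"
    proof (cases "J \<in> JE")
      case True then show ?thesis unfolding X_def P_def proj_def by auto
    next
      case False
      show ?thesis
      proof (cases "J \<in> Jfam e2")
        case True
        have "X (P w) J = (\<Sum>J'\<in>{J' \<in> Jfam e1. J \<subseteq> J'}. w J')"
          using False True e1JE unfolding X_def P_def proj_def by (auto intro!: sum.cong)
        then show ?thesis using that True unfolding Cs_def by auto
      next
        case False2: False
        then have "J \<notin> JE'" using False JE'_eq by auto
        then show ?thesis using that False False2 unfolding X_def RS_def by auto
      qed
    qed
  qed
  have inj: "inj_on P (MC V (insert e2 E))"
  proof (rule inj_onI)
    fix x y assume xy: "x \<in> MC V (insert e2 E)" "y \<in> MC V (insert e2 E)" "P x = P y"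
    have "x \<in> Cs \<inter> RS JE'" "y \<in> Cs \<inter> RS JE'" using MCsub xy(1,2) by (auto simp only: subsetD)
    then have "X (P x) = x" "X (P y) = y" using XP by simp_all
    then show "x = y" using xy(3) by metis
  qed
  have last: "MC V (insert e2 E) =
         {w \<in> RS (JH V (insert e2 E)). P w \<in> MC V E \<and>
            (\<forall>J\<in>Jfam e2. w J = (\<Sum>J'\<in>{J' \<in> Jfam e1. J \<subseteq> J'}. w J'))}"
  proof
    show "MC V (insert e2 E) \<subseteq> {w \<in> RS (JH V (insert e2 E)). P w \<in> MC V E \<and>
            (\<forall>J\<in>Jfam e2. w J = (\<Sum>J'\<in>{J' \<in> Jfam e1. J \<subseteq> J'}. w J'))}"
    proof
      fix w assume w: "w \<in> MC V (insert e2 E)"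
      then have "w \<in> Cs" "w \<in> RS JE'" using MCsub by (auto simp only: subsetD Int_iff)
      moreover have "P w \<in> MC V E" using imageI[OF w, of P] MCeq by simp
      ultimately show "w \<in> {w \<in> RS (JH V (insert e2 E)). P w \<in> MC V E \<and>
            (\<forall>J\<in>Jfam e2. w J = (\<Sum>J'\<in>{J' \<in> Jfam e1. J \<subseteq> J'}. w J'))}"
        unfolding Cs_def JE'_def by simp
    qed
  next
    show "{w \<in> RS (JH V (insert e2 E)). P w \<in> MC V E \<and>
            (\<forall>J\<in>Jfam e2. w J = (\<Sum>J'\<in>{J' \<in> Jfam e1. J \<subseteq> J'}. w J'))} \<subseteq> MC V (insert e2 E)"
    proof
      fix w assume w: "w \<in> {w \<in> RS (JH V (insert e2 E)). P w \<in> MC V E \<and>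
            (\<forall>J\<in>Jfam e2. w J = (\<Sum>J'\<in>{J' \<in> Jfam e1. J \<subseteq> J'}. w J'))}"
      then have "w \<in> Cs \<inter> RS JE'" unfolding Cs_def JE'_def by auto
      then have "w = X (P w)" using XP by auto
      moreover have "X (P w) \<in> X ` MC V E" using w by auto
      moreover have "X ` MC V E \<subseteq> MC V (insert e2 E)"
        unfolding MC_def convex_hull_linear_image[OF linX] by (rule hull_mono[OF XS])
      ultimately show "w \<in> MC V (insert e2 E)" by auto
    qed
  qed
  have f1: "linear (proj (JH V E))" using linP unfolding P_def JE_def .
  have f2: "inj_on (proj (JH V E)) (MC V (insert e2 E))" using inj unfolding P_def JE_def .
  have f3: "proj (JH V E) ` MC V (insert e2 E) = MC V E" using MCeq unfolding P_def JE_def .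
  have f4: "MC V (insert e2 E) =
         {w \<in> RS (JH V (insert e2 E)).
            proj (JH V E) w \<in> MC V E \<and>
            (\<forall>J\<in>Jfam e2. w J = (\<Sum>J'\<in>{J' \<in> Jfam e1. J \<subseteq> J'}. w J'))}"
    using last unfolding P_def JE_def .
  show ?thesis using f1 f2 f3 f4 by (intro conjI)
qed

end
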